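(* There exists $n_0$ such that for all integers $n>n_0$: $$\langle \ell_n\alpha\rangle=3A\langle k_n\theta\rangle\quad\text{and}\quad\langle\ell_n\alpha^2\rangle=\langle k_n\theta^2\rangle-2B\langle k_n\theta\rangle.$$
   Context: Let $f(x)=Ax^3+Bx^2+Cx+D\in\mathbb{Z}[x]$ be irreducible with $A>0$, having exactly one real root $\alpha$. Put $p=3(B^2-3AC)$, $q=-2B^3+9ABC-27A^2D$, so that $27A^2f\!\left(\frac{x-B}{3A}\right)=x^3-px-q$, and put $\theta=3A\alpha+B$, the unique real root of $x^3-px-q$. Let $K=\mathbb{Q}(\theta)=\mathbb{Q}(\alpha)\subset\mathbb{R}$ with ring of integers $\mathcal{O}_K$, let $d$ be a positive integer with $\mathcal{O}_K\subseteq\frac1d\mathbb{Z}[\theta]$, and let $\lambda\in\mathcal{O}_K$ be a unit with $\lambda>1$. Define rationals $a_n,b_n,c_n$ by $a_n+b_n\theta+c_n\theta^2=\lambda^n$, and $k_n=dc_n$, $\ell_n=9A^2k_n$. For $x\in\mathbb{R}$, $\langle x\rangle=x-\lfloor x+\tfrac12\rfloor$. *)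

theory Defs
  imports "HOL-Analysis.Analysis" "HOL-Computational_Algebra.Polynomial"
begin

definition cfrac :: "real \<Rightarrow> real" where
  "cfrac x = x - of_int \<lfloor>x + 1/2\<rfloor>"

definition cubic_field :: "real \<Rightarrow> real set" where
  "cubic_field t = {x. \<exists>a b c :: rat. x = of_rat a + of_rat b * t + of_rat c * t^2}"

definition ring_of_integers :: "real \<Rightarrow> real set" where
  "ring_of_integers t = {x \<in> cubic_field t. algebraic_int x}"

end

theory Submission
  imports Defs "Berlekamp_Zassenhaus.Factor_Bound" "Jordan_Normal_Form.Char_Poly"
begin


lemma alg_int_pow:
  fixes x :: real
  assumes "algebraic_int x" shows "algebraic_int (x^n)"
proof -
  obtain p :: "int poly" where px: "poly (map_poly of_int p) x = 0" and lc: "lead_coeff p = 1"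
    using assms by (auto simp: algebraic_int_altdef_ipoly)
  define k where "k = degree p"
  have k0: "k > 0"
  proof (rule ccontr)
    assume "\<not> k > 0" then have "degree p = 0" by (simp add: k_def)
    then have "p = [:1:]" using lc using degree_0_id[of p] by simp
    then show False using px by simp
  qed
  define C :: "int mat" where "C = mat k k (\<lambda>(i,j). if i+1 < k then (if j = i+1 then 1 else 0) else - Polynomial.coeff p j)"
  define Cr :: "real mat" where "Cr = map_mat of_int C"
  define v :: "real vec" where "v = vec k (\<lambda>i. x^i)"
  have C: "C \<in> carrier_mat k k" by (simp add: C_def)
  have Cr: "Cr \<in> carrier_mat k k" by (simp add: Cr_def C_def)
  have pol: "(\<Sum>j<k. of_int (Polynomial.coeff p j) * x^j) = - (x^k)"
  proof -
    have "0 = (\<Sum>j\<le>k. of_int (Polynomial.coeff p j) * x^j)"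
      using px by (simp add: poly_altdef k_def degree_map_poly coeff_map_poly)
    also have "\<dots> = (\<Sum>j<k. of_int (Polynomial.coeff p j) * x^j) + x^k"
      using lc by (simp add: lessThan_Suc_atMost[symmetric] k_def)
    finally show ?thesis by linarith
  qed
  have ev: "Cr *\<^sub>v v = x \<cdot>\<^sub>v v"
  proof (rule eq_vecI)
    fix i assume "i < dim_vec (x \<cdot>\<^sub>v v)"
    then have i: "i < k" by (simp add: v_def)
    have "(Cr *\<^sub>v v) $ i = (\<Sum>j<k. Cr $$ (i,j) * x^j)"
      using i Cr by (simp add: Cr_def C_def v_def scalar_prod_def atLeast0LessThan)
    also have "\<dots> = x * x^i"
    proof (cases "i+1 < k")
      case True
      have "(\<Sum>j<k. Cr $$ (i,j) * x^j) = (\<Sum>j<k. if j = i+1 then x^(i+1) else 0)"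
        using i True by (intro sum.cong) (auto simp: Cr_def C_def)
      also have "\<dots> = x^(i+1)" using True by simp
      finally show ?thesis by simp
    next
      case False
      then have ik: "i = k - 1" using i by simp
      have "(\<Sum>j<k. Cr $$ (i,j) * x^j) = (\<Sum>j<k. - (of_int (Polynomial.coeff p j) * x^j))"
        using i False by (intro sum.cong) (auto simp: Cr_def C_def)
      also have "\<dots> = x^k" using pol by (simp add: sum_negf)
      also have "\<dots> = x * x^i" using k0 ik by (metis Suc_diff_1 power_Suc)
      finally show ?thesis .
    qed
    finally show "(Cr *\<^sub>v v) $ i = (x \<cdot>\<^sub>v v) $ i" using i by (simp add: v_def)
  qed (simp add: v_def Cr_def C_def)
  have vne: "v \<noteq> 0\<^sub>v k"
  proof
    assume "v = 0\<^sub>v k"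
    then have "v $ 0 = 0" using k0 by simp
    then show False using k0 by (simp add: v_def)
  qed
  have eigv: "eigenvector Cr v x" unfolding eigenvector_def
    using ev vne Cr by (simp add: v_def)
  have "Cr ^\<^sub>m n *\<^sub>v v = x^n \<cdot>\<^sub>v v" by (rule eigenvector_pow[OF Cr eigv])
  moreover have Crn: "Cr ^\<^sub>m n \<in> carrier_mat k k" using Cr by simp
  ultimately have "eigenvector (Cr ^\<^sub>m n) v (x^n)" unfolding eigenvector_def
    using vne Cr by (simp add: v_def)
  then have "eigenvalue (Cr ^\<^sub>m n) (x^n)" by (auto simp: eigenvalue_def)
  then have "poly (char_poly (Cr ^\<^sub>m n)) (x^n) = 0" using eigenvalue_root_char_poly[OF Crn] by simp
  moreover have "Cr ^\<^sub>m n = map_mat of_int (C ^\<^sub>m n)" unfolding Cr_def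
    by (rule of_int_hom.mat_hom_pow[OF C, symmetric])
  moreover have "char_poly (map_mat (of_int :: int \<Rightarrow> real) (C ^\<^sub>m n)) = map_poly of_int (char_poly (C ^\<^sub>m n))"
    by (rule of_int_hom.char_poly_hom[of _ k]) (use C in simp)
  ultimately have r: "poly (map_poly of_int (char_poly (C ^\<^sub>m n))) (x^n) = 0" by simp
  have "lead_coeff (char_poly (C ^\<^sub>m n)) = 1"
    using degree_monic_char_poly[of "C ^\<^sub>m n" k] C by simp
  with r show ?thesis by (auto simp: algebraic_int_altdef_ipoly)
qed



lemma no_rat_root:
  fixes A B C D :: int and r :: rat
  assumes irr: "irreducible [:D, C, B, A:]" and A: "A \<noteq> 0"
  shows "poly (map_poly rat_of_int [:D, C, B, A:]) r \<noteq> 0"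
proof
  assume "poly (map_poly rat_of_int [:D, C, B, A:]) r = 0"
  then have "[:-r, 1:] dvd map_poly rat_of_int [:D, C, B, A:]"
    using poly_eq_0_iff_dvd by blast
  then obtain h where h: "map_poly rat_of_int [:D, C, B, A:] = [:-r, 1:] * h" by (elim dvdE)
  from rat_to_int_factor[OF h] obtain g' h' where gh: "[:D, C, B, A:] = g' * h'"
    and dg: "degree g' = degree [:-r, 1:]" and dh: "degree h' = degree h" by blast
  have d3: "degree (map_poly rat_of_int [:D, C, B, A:]) = 3" using A by simp
  have "h \<noteq> 0" using h d3 by auto
  have "degree ([:-r,1:] * h) = 1 + degree h" using \<open>h \<noteq> 0\<close> by (subst degree_mult_eq) auto
  then have "degree h = 2" using h d3 by simp
  then have "\<not> g' dvd 1" "\<not> h' dvd 1" using dg dh by (auto simp: is_unit_poly_iff)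
  then show False using irr gh using Factorial_Ring.irreducibleD by blast
qed

lemma rat_cubic:
  fixes t :: real and \<rho> :: rat and p q :: int
  assumes "t = of_rat \<rho>" "t^3 = of_int p * t + of_int q"
  shows "\<rho>^3 = of_int p * \<rho> + of_int q"
proof -
  have "(of_rat (\<rho>^3)::real) = of_rat (of_int p * \<rho> + of_int q)"
    using assms by (simp add: of_rat_add of_rat_mult of_rat_power)
  then show ?thesis by (simp only: of_rat_eq_iff)
qed

lemma lin_indep:
  fixes A B C D :: int and \<alpha> :: real and r0 r1 r2 :: rat
  assumes irr: "irreducible [:D, C, B, A:]" and A: "A \<noteq> 0"
    and root: "poly (map_poly of_int [:D, C, B, A:]) \<alpha> = 0"
    and rel: "of_rat r0 + of_rat r1 * (3 * of_int A * \<alpha> + of_int B) + of_rat r2 * (3 * of_int A * \<alpha> + of_int B)^2 = (0::real)"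
  shows "r0 = 0 \<and> r1 = 0 \<and> r2 = 0"
proof (rule ccontr)
  assume nz: "\<not> (r0 = 0 \<and> r1 = 0 \<and> r2 = 0)"
  define t where "t = 3 * of_int A * \<alpha> + (of_int B :: real)"
  define p :: int where "p = 3*(B^2 - 3*A*C)"
  define q :: int where "q = -2*B^3 + 9*A*B*C - 27*A^2*D"
  have rt: "D + \<alpha> * (C + \<alpha> * (B + \<alpha> * A)) = 0" using root by (simp add: of_int_hom.map_poly_pCons_hom)
  have t3: "t^3 = of_int p * t + of_int q"
  proof -
    have "t^3 - of_int p * t - of_int q = 27 * (of_int A)^2 * (D + \<alpha> * (C + \<alpha> * (B + \<alpha> * A)))"
      by (simp add: t_def p_def q_def algebra_simps power2_eq_square power3_eq_cube)
    then show ?thesis using rt by simp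
  qed
  have rel': "of_rat r0 + of_rat r1 * t + of_rat r2 * t^2 = 0" using rel by (simp add: t_def)
  have ex: "\<exists>\<rho>::rat. \<rho>^3 = of_int p * \<rho> + of_int q"
  proof (cases "r2 = 0")
    case True
    then have r1: "r1 \<noteq> 0" using nz rel' by auto
    have "t = of_rat (- r0 / r1)" using rel' True r1 by (simp add: field_simps of_rat_divide of_rat_minus)
    then show ?thesis using rat_cubic t3 by blast
  next
    case False
    define a where "a = - r1 / r2"
    define b where "b = - r0 / r2"
    have t2: "t^2 = of_rat a * t + of_rat b"
      using rel' False by (simp add: a_def b_def field_simps of_rat_divide of_rat_minus)
    have "t^3 = of_rat (a^2 + b) * t + of_rat (a*b)"
    proof -
      have "t^3 = t * t^2" by (simp add: power3_eq_cube power2_eq_square)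
      also have "\<dots> = t * (of_rat a * t + of_rat b)" by (simp only: t2)
      also have "\<dots> = of_rat a * t^2 + of_rat b * t" by (simp add: power2_eq_square algebra_simps)
      also have "\<dots> = of_rat a * (of_rat a * t + of_rat b) + of_rat b * t" by (simp only: t2)
      also have "\<dots> = of_rat (a^2 + b) * t + of_rat (a*b)" by (simp add: of_rat_add of_rat_mult of_rat_power power2_eq_square algebra_simps)
      finally show ?thesis .
    qed
    then have e: "of_rat (a^2 + b - of_int p) * t = of_rat (of_int q - a*b)"
      using t3 by (simp add: of_rat_add of_rat_mult of_rat_diff algebra_simps)
    show ?thesis
    proof (cases "a^2 + b - of_int p = 0")
      case True
      then have "of_int q - a*b = 0" using e by simp
      moreover have "of_int p = a^2 + b" using True by simp
      ultimately have "(-a)^3 = of_int p * (-a) + of_int q"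
        by (simp add: power3_eq_cube power2_eq_square algebra_simps)
      then show ?thesis by blast
    next
      case ne: False
      define \<rho> where "\<rho> = (of_int q - a*b) / (a^2 + b - of_int p)"
      have "t = of_rat \<rho>" using e ne by (simp add: \<rho>_def of_rat_divide field_simps)
      then show ?thesis using rat_cubic t3 by blast
    qed
  qed
  then obtain \<rho> :: rat where rho: "\<rho>^3 = of_int p * \<rho> + of_int q" by blast
  define r where "r = (\<rho> - of_int B) / (3 * of_int A)"
  have "27 * (of_int A)^2 * poly (map_poly rat_of_int [:D, C, B, A:]) r = \<rho>^3 - of_int p * \<rho> - of_int q"
    using A by (simp add: r_def p_def q_def field_simps power2_eq_square power3_eq_cube)
  then have "poly (map_poly rat_of_int [:D, C, B, A:]) r = 0" using rho A by simp
  then show False using no_rat_root[OF irr A] by blast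
qed



definition Rel :: "real \<Rightarrow> complex \<Rightarrow> real \<Rightarrow> complex \<Rightarrow> bool" where
  "Rel t t2 x z \<longleftrightarrow> (\<exists>a b c::rat. x = of_rat a + of_rat b * t + of_rat c * t^2 \<and>
      z = of_rat a + of_rat b * t2 + of_rat c * t2^2)"

definition LI :: "real \<Rightarrow> bool" where
  "LI t \<longleftrightarrow> (\<forall>r0 r1 r2::rat. of_rat r0 + of_rat r1 * t + of_rat r2 * t^2 = 0 \<longrightarrow> r0 = 0 \<and> r1 = 0 \<and> r2 = 0)"

lemma LI_unique:
  assumes "LI t" "of_rat a + of_rat b * t + of_rat c * t^2 = of_rat a' + of_rat b' * t + of_rat c' * t^2"
  shows "a = a' \<and> b = b' \<and> c = c'"
proof -
  have "of_rat (a - a') + of_rat (b - b') * t + of_rat (c - c') * t^2 = 0"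
    using assms(2) by (simp add: of_rat_diff algebra_simps)
  then show ?thesis using assms(1) unfolding LI_def by fastforce
qed

lemma Rel_unique:
  assumes "LI t" "Rel t t2 x z" "Rel t t2 x z'" shows "z = z'"
  using assms LI_unique[OF assms(1)] unfolding Rel_def by metis

lemma cub_mult:
  fixes t :: "'a::field_char_0"
  assumes "t^3 = of_int p * t + of_int q"
  shows "(of_rat a + of_rat b * t + of_rat c * t^2) * (of_rat a' + of_rat b' * t + of_rat c' * t^2) =
     of_rat (a*a' + of_int q*(b*c'+c*b')) + of_rat (a*b'+b*a' + of_int p*(b*c'+c*b') + of_int q*c*c') * t
     + of_rat (a*c'+b*b'+c*a' + of_int p*c*c') * t^2"
proof -
  have "(of_rat a + of_rat b * t + of_rat c * t^2) * (of_rat a' + of_rat b' * t + of_rat c' * t^2) -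
     (of_rat (a*a' + of_int q*(b*c'+c*b')) + of_rat (a*b'+b*a' + of_int p*(b*c'+c*b') + of_int q*c*c') * t
     + of_rat (a*c'+b*b'+c*a' + of_int p*c*c') * t^2)
     = (of_rat (b*c'+c*b') + of_rat (c*c') * t) * (t^3 - of_int p * t - of_int q)"
    by (simp add: of_rat_add of_rat_mult algebra_simps power2_eq_square power3_eq_cube)
  then show ?thesis using assms by simp
qed

lemma Rel_mult:
  assumes "t^3 = of_int p * t + of_int q" "t2^3 = of_int p * t2 + of_int q"
    "Rel t t2 x z" "Rel t t2 y w"
  shows "Rel t t2 (x*y) (z*w)"
proof -
  obtain a b c where x: "x = of_rat a + of_rat b * t + of_rat c * t^2" and z: "z = of_rat a + of_rat b * t2 + of_rat c * t2^2"
    using assms(3) unfolding Rel_def by blast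
  obtain a' b' c' where y: "y = of_rat a' + of_rat b' * t + of_rat c' * t^2" and w: "w = of_rat a' + of_rat b' * t2 + of_rat c' * t2^2"
    using assms(4) unfolding Rel_def by blast
  show ?thesis unfolding Rel_def x y z w cub_mult[OF assms(1)] cub_mult[OF assms(2)] by blast
qed

lemma Rel_1: "Rel t t2 1 1"
  unfolding Rel_def by (rule exI[of _ 1], rule exI[of _ 0], rule exI[of _ 0]) simp

lemma Rel_pow:
  assumes "t^3 = of_int p * t + of_int q" "t2^3 = of_int p * t2 + of_int q" "Rel t t2 x z"
  shows "Rel t t2 (x^n) (z^n)"
  by (induction n) (auto simp: Rel_1 intro: Rel_mult[OF assms(1,2) assms(3)])



lemma quad_to_cubic:
  fixes t y p q :: "'a::comm_ring_1"
  assumes "t^3 = p*t + q" "y^2 + t*y + t^2 - p = 0"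
  shows "y^3 = p*y + q"
proof -
  have "y^3 - p*y - q = (y - t)*(y^2 + t*y + t^2 - p) + (t^3 - p*t - q)"
    by (simp add: algebra_simps power2_eq_square power3_eq_cube)
  then have "y^3 - p*y - q = 0" using assms by simp
  then show ?thesis by (metis diff_diff_eq eq_iff_diff_eq_0)
qed

lemma disc_pos:
  fixes t p q :: real
  assumes t3: "t^3 = p*t + q" and u: "\<forall>y. y^3 = p*y + q \<longrightarrow> y = t" and t0: "t \<noteq> 0"
  shows "3*t^2 - 4*p > 0"
proof (rule ccontr)
  assume "\<not> ?thesis"
  then have D: "4*p - 3*t^2 \<ge> 0" by simp
  define s where "s = sqrt (4*p - 3*t^2)"
  have s2: "s^2 = 4*p - 3*t^2" using D by (simp add: s_def)
  have "((-t+s)/2)^2 + t*((-t+s)/2) + t^2 - p = 0"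
    using s2 by (simp add: power2_eq_square field_simps)
  then have "((-t+s)/2) = t" using u quad_to_cubic[OF t3] by blast
  moreover have "((-t-s)/2)^2 + t*((-t-s)/2) + t^2 - p = 0"
    using s2 by (simp add: power2_eq_square field_simps)
  then have "((-t-s)/2) = t" using u quad_to_cubic[OF t3] by blast
  ultimately show False using t0 by simp
qed

lemma t2_facts:
  fixes t s :: real and p q :: int
  assumes t3: "t^3 = of_int p * t + of_int q" and s2: "s^2 = 3*t^2 - 4*p"
  defines "t2 \<equiv> Complex (-t/2) (s/2)"
  shows "t2^3 = of_int p * t2 + of_int q" "Re t2 = -t/2" "Re (t2^2) = p - t^2/2"
    "t2 - cnj t2 = \<i> * of_real s" "t2 + cnj t2 = - of_real t" "t2 * cnj t2 = of_real (t^2 - p)"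
proof -
  have q: "t2^2 + of_real t * t2 + of_real t^2 - of_int p = 0"
    using s2 by (simp add: t2_def complex_eq_iff power2_eq_square field_simps)
  have t3': "(of_real t :: complex)^3 = of_int p * of_real t + of_int q"
    using arg_cong[OF t3, of "of_real :: real \<Rightarrow> complex"] by simp
  show "t2^3 = of_int p * t2 + of_int q" using quad_to_cubic[OF t3' q] .
  show "Re t2 = -t/2" by (simp add: t2_def)
  show "Re (t2^2) = p - t^2/2" using s2 by (simp add: t2_def power2_eq_square field_simps)
  show "t2 - cnj t2 = \<i> * of_real s" by (simp add: t2_def complex_eq_iff)
  show "t2 + cnj t2 = - of_real t" by (simp add: t2_def complex_eq_iff)
  show "t2 * cnj t2 = of_real (t^2 - p)" using s2 by (simp add: t2_def complex_eq_iff power2_eq_square field_simps)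
qed

lemma cfrac_near:
  assumes "x = of_int m + e" "\<bar>e\<bar> < 1/2" shows "cfrac x = e"
proof -
  have "\<lfloor>x + 1/2\<rfloor> = m" using assms by (intro floor_unique) auto
  then show ?thesis using assms by (simp add: cfrac_def)
qed



lemma rep_lemma:
  fixes d :: int
  assumes LI: "LI t" and dpos: "d > 0"
    and dOK: "\<forall>x \<in> ring_of_integers t. \<exists>u v w :: int. x = (of_int u + of_int v * t + of_int w * t^2) / of_int d"
    and R: "Rel t t2 x z" and ai: "algebraic_int x"
  shows "\<exists>u v w::int. x = (of_int u + of_int v * t + of_int w * t^2) / of_int d \<and>
           of_int d * z = of_int u + of_int v * t2 + of_int w * t2^2"
proof -
  obtain a b c where x: "x = of_rat a + of_rat b * t + of_rat c * t^2" and z: "z = of_rat a + of_rat b * t2 + of_rat c * t2^2"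
    using R unfolding Rel_def by blast
  have "x \<in> ring_of_integers t" using x ai unfolding ring_of_integers_def cubic_field_def by blast
  then obtain u v w :: int where xu: "x = (of_int u + of_int v * t + of_int w * t^2) / of_int d" using dOK by blast
  have "x = of_rat (of_int u / of_int d) + of_rat (of_int v / of_int d) * t + of_rat (of_int w / of_int d) * t^2"
    using xu dpos by (simp add: of_rat_divide add_divide_distrib)
  then have "a = of_int u / of_int d \<and> b = of_int v / of_int d \<and> c = of_int w / of_int d"
    using LI_unique[OF LI] x by metis
  then have abc: "(of_rat a::complex) = of_int u / of_int d" "(of_rat b::complex) = of_int v / of_int d"
      "(of_rat c::complex) = of_int w / of_int d" by (simp_all add: of_rat_divide)
  have "of_int d * z = of_int u + of_int v * t2 + of_int w * t2^2"
    using dpos unfolding z abc by (simp add: field_simps)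
  then show ?thesis using xu by blast
qed

lemma trace_lemma:
  fixes d p :: int
  assumes rep: "x = (of_int u + of_int v * t + of_int w * t^2) / of_int d"
      "of_int d * z = of_int u + of_int v * t2 + of_int w * t2^2"
    and dpos: "d > 0" and r1: "Re t2 = -t/2" and r2: "Re (t2^2) = p - t^2/2"
  shows "of_int d * (x + 2 * Re z) = of_int (3*u + 2*p*w)"
proof -
  have "Re (of_int d * z) = of_int u + of_int v * Re t2 + of_int w * Re (t2^2)"
    by (subst rep(2)) simp
  then have "of_int d * Re z = of_int u + of_int v * Re t2 + of_int w * Re (t2^2)" by simp
  moreover have "of_int d * x = of_int u + of_int v * t + of_int w * t^2" using rep(1) dpos by simp
  ultimately show ?thesis using r1 r2 by (simp add: algebra_simps)
qed

lemma norm_lemma: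
  fixes d :: int and x :: real and z :: complex
  assumes "of_int d * (x + 2 * Re z) = of_int T1"
    "of_int d * (x^2 + 2 * Re (z^2)) = of_int T2"
    "of_int d * (x^3 + 2 * Re (z^3)) = of_int T3"
  shows "6 * of_int d^3 * x * cmod z ^ 2 = of_int (T1^3 - 3*d*T1*T2 + 2*d^2*T3)"
proof -
  have z2: "Re (z^2) = Re z ^2 - Im z^2" by (simp add: power2_eq_square)
  have z3: "Re (z^3) = Re z ^3 - 3 * Re z * Im z^2" by (simp add: power3_eq_cube power2_eq_square algebra_simps)
  have "6 * of_int d^3 * x * cmod z ^ 2 = 6 * of_int d^3 * x * (Re z^2 + Im z^2)" by (simp add: cmod_power2)
  also have "\<dots> = (of_int d * (x + 2 * Re z))^3 - 3 * of_int d * (of_int d * (x + 2 * Re z)) * (of_int d * (x^2 + 2 * Re (z^2)))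
      + 2 * of_int d^2 * (of_int d * (x^3 + 2 * Re (z^3)))"
    unfolding z2 z3 by (simp add: algebra_simps power2_eq_square power3_eq_cube)
  also have "\<dots> = of_int (T1^3 - 3*d*T1*T2 + 2*d^2*T3)" using assms by simp
  finally show ?thesis .
qed



theorem mainTheorem19:
  fixes A B C D :: int and \<alpha> lam :: real and d :: int
  assumes irr: "irreducible [:D, C, B, A:]"
    and Apos: "A > 0"
    and root: "poly (map_poly of_int [:D, C, B, A:]) \<alpha> = 0"
    and uniq: "\<forall>x::real. poly (map_poly of_int [:D, C, B, A:]) x = 0 \<longrightarrow> x = \<alpha>"
    and dpos: "d > 0"
    and dOK: "\<forall>x \<in> ring_of_integers (3 * of_int A * \<alpha> + of_int B).
               \<exists>u v w :: int. x = (of_int u + of_int v * (3 * of_int A * \<alpha> + of_int B)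
                                  + of_int w * (3 * of_int A * \<alpha> + of_int B)^2) / of_int d"
    and lamOK: "lam \<in> ring_of_integers (3 * of_int A * \<alpha> + of_int B)"
    and lamunit: "inverse lam \<in> ring_of_integers (3 * of_int A * \<alpha> + of_int B)"
    and lamgt: "lam > 1"
  shows "\<exists>n0::int. \<forall>n::int. n > n0 \<longrightarrow>
    (\<forall>a b c :: rat.
       (let \<theta> = 3 * of_int A * \<alpha> + of_int B in
        of_rat a + of_rat b * \<theta> + of_rat c * \<theta>^2 = lam powi n \<longrightarrow>
        (let k = of_int d * of_rat c; l = 9 * (of_int A)^2 * k in
           cfrac (l * \<alpha>) = 3 * of_int A * cfrac (k * \<theta>) \<and>
           cfrac (l * \<alpha>^2) = cfrac (k * \<theta>^2) - 2 * of_int B * cfrac (k * \<theta>))))"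
proof -
  define t where "t = 3 * of_int A * \<alpha> + (of_int B :: real)"
  define p :: int where "p = 3*(B^2 - 3*A*C)"
  define q :: int where "q = -2*B^3 + 9*A*B*C - 27*A^2*D"
  have A0: "A \<noteq> 0" using Apos by simp
  have key: "(3 * of_int A * x + of_int B)^3 - of_int p * (3 * of_int A * x + of_int B) - of_int q
      = 27 * (of_int A)^2 * poly (map_poly of_int [:D,C,B,A:]) x" for x :: real
    by (simp add: of_int_hom.map_poly_pCons_hom p_def q_def algebra_simps power2_eq_square power3_eq_cube)
  have t3: "t^3 = of_int p * t + of_int q"
    using key[of \<alpha>] root by (simp add: t_def)
  have LIt: "LI t" unfolding LI_def t_def using lin_indep[OF irr A0 root] by blast
  have t0: "t \<noteq> 0"
  proof
    assume "t = 0"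
    then have "of_rat 0 + of_rat 1 * t + of_rat 0 * t^2 = 0" by simp
    from LIt[unfolded LI_def, rule_format, OF this] show False by simp
  qed
  have uniq': "\<forall>y. y^3 = of_int p * y + of_int q \<longrightarrow> y = t"
  proof (intro allI impI)
    fix y :: real assume y: "y^3 = of_int p * y + of_int q"
    define x where "x = (y - of_int B) / (3 * of_int A)"
    have yx: "y = 3 * of_int A * x + of_int B" using A0 by (simp add: x_def)
    have "27 * (of_int A)^2 * poly (map_poly of_int [:D,C,B,A:]) x = 0"
      using key[of x] y yx by simp
    then have "x = \<alpha>" using uniq A0 by simp
    then show "y = t" using yx by (simp add: t_def)
  qed
  have disc: "3*t^2 - 4*p > 0" using disc_pos[OF t3 uniq' t0] by simp
  define s where "s = sqrt (3*t^2 - 4*p)"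
  have s0: "s > 0" using disc by (simp add: s_def)
  have s2: "s^2 = 3*t^2 - 4*p" using disc by (simp add: s_def)
  define t2 where "t2 = Complex (-t/2) (s/2)"
  note tf = t2_facts[OF t3 s2, folded t2_def]
  have t2c: "t2^3 = of_int p * t2 + of_int q" using tf(1) .
  have dOK': "\<forall>x \<in> ring_of_integers t. \<exists>u v w :: int. x = (of_int u + of_int v * t + of_int w * t^2) / of_int d"
    unfolding t_def using dOK .
  obtain a0 b0 c0 where lam0: "lam = of_rat a0 + of_rat b0 * t + of_rat c0 * t^2"
    using lamOK unfolding ring_of_integers_def cubic_field_def t_def by blast
  define l2 where "l2 = of_rat a0 + of_rat b0 * t2 + of_rat c0 * t2^2"
  have Rl: "Rel t t2 lam l2" unfolding Rel_def l2_def using lam0 by blast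
  obtain a1 b1 c1 where lam1: "inverse lam = of_rat a1 + of_rat b1 * t + of_rat c1 * t^2"
    using lamunit unfolding ring_of_integers_def cubic_field_def t_def by blast
  define m2 where "m2 = of_rat a1 + of_rat b1 * t2 + of_rat c1 * t2^2"
  have Rm: "Rel t t2 (inverse lam) m2" unfolding Rel_def m2_def using lam1 by blast
  have "Rel t t2 (lam * inverse lam) (l2 * m2)" by (rule Rel_mult[OF t3 t2c Rl Rm])
  then have "Rel t t2 1 (l2 * m2)" using lamgt by simp
  then have lm: "l2 * m2 = 1" using Rel_unique[OF LIt _ Rel_1] by metis
  have ai_lam: "algebraic_int lam" using lamOK unfolding ring_of_integers_def by blast
  have ai_inv: "algebraic_int (inverse lam)" using lamunit unfolding ring_of_integers_def by blast
  have tr: "\<exists>T::int. of_int d * (x + 2 * Re z) = of_int T" if hx: "Rel t t2 x z" "algebraic_int x" for x z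
  proof -
    obtain u v w :: int where "x = (of_int u + of_int v * t + of_int w * t^2) / of_int d"
      "of_int d * z = of_int u + of_int v * t2 + of_int w * t2^2"
      using rep_lemma[OF LIt dpos dOK' hx] by blast
    from trace_lemma[OF this dpos tf(2) tf(3)] show ?thesis by blast
  qed
  have nrm: "\<exists>I::int. 6 * of_int d^3 * x * cmod z ^ 2 = of_int I" if hx: "Rel t t2 x z" "algebraic_int x" for x z
  proof -
    obtain T1 where "of_int d * (x + 2 * Re z) = of_int T1" using tr hx by blast
    moreover obtain T2 where "of_int d * (x^2 + 2 * Re (z^2)) = of_int T2"
      using tr Rel_pow[OF t3 t2c hx(1)] alg_int_pow[OF hx(2)] by blast
    moreover obtain T3 where "of_int d * (x^3 + 2 * Re (z^3)) = of_int T3"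
      using tr Rel_pow[OF t3 t2c hx(1)] alg_int_pow[OF hx(2)] by blast
    ultimately show ?thesis using norm_lemma by blast
  qed
  define N where "N = lam * cmod l2 ^ 2"
  have l2nz: "l2 \<noteq> 0" using lm by auto
  have Npos: "N > 0" using lamgt l2nz by (simp add: N_def)
  have cm: "cmod m2 = 1 / cmod l2" using lm l2nz by (metis norm_mult norm_one nonzero_eq_divide_eq norm_eq_zero mult.commute)
  have N1: "\<exists>I::int. 6 * of_int d^3 * N^m = of_int I" for m :: nat
  proof -
    obtain I :: int where "6 * of_int d^3 * lam^m * cmod (l2^m) ^ 2 = of_int I"
      using nrm[OF Rel_pow[OF t3 t2c Rl] alg_int_pow[OF ai_lam]] by blast
    moreover have "lam^m * cmod (l2^m) ^ 2 = N^m" by (simp add: N_def norm_power power_mult_distrib mult.commute flip: power_mult)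
    ultimately show ?thesis by (metis mult.assoc)
  qed
  have N2: "\<exists>I::int. 6 * of_int d^3 * (1/N)^m = of_int I" for m :: nat
  proof -
    obtain I :: int where "6 * of_int d^3 * (inverse lam)^m * cmod (m2^m) ^ 2 = of_int I"
      using nrm[OF Rel_pow[OF t3 t2c Rm] alg_int_pow[OF ai_inv]] by blast
    moreover have "(inverse lam)^m * cmod (m2^m) ^ 2 = (1/N)^m"
      by (simp add: N_def cm norm_power power_mult_distrib field_simps flip: power_mult)
    ultimately show ?thesis by (metis mult.assoc)
  qed
  have "(1::real) \<le> of_int d" using dpos by simp
  then have "(1::real) \<le> of_int d ^ 3" by (rule one_le_power)
  then have d3: "6 * (of_int d :: real)^3 \<ge> 1" by linarith
  have Neq: "N = 1"
  proof (rule ccontr)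
    assume "N \<noteq> 1"
    have "\<exists>x::real. x > 0 \<and> x < 1 \<and> (\<forall>m::nat. \<exists>I::int. 6 * of_int d^3 * x^m = of_int I)"
    proof (cases "N < 1")
      case True then show ?thesis using N1 Npos by blast
    next
      case False then have "N > 1" using \<open>N \<noteq> 1\<close> by simp
      then show ?thesis using N2 by (intro exI[of _ "1/N"]) auto
    qed
    then obtain x :: real where x0: "x > 0" "x < 1" and xI: "\<And>m::nat. \<exists>I::int. 6 * of_int d^3 * x^m = of_int I"
      by blast
    obtain m where "x^m < 1 / (6 * of_int d^3)" using real_arch_pow_inv[of "1 / (6 * of_int d^3)" x] x0 dpos by auto
    then have lt: "6 * of_int d^3 * x^m < 1" using d3 dpos pos_less_divide_eq[of "6 * of_int d^3" "x^m" 1] by (simp add: mult.commute)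
    have gt: "6 * of_int d^3 * x^m > 0" using d3 x0 dpos by simp
    obtain I :: int where "6 * of_int d^3 * x^m = of_int I" using xI by blast
    then show False using lt gt by (metis of_int_0_less_iff of_int_less_1_iff int_one_le_iff_zero_less not_le)
  qed
  have rho1: "cmod l2 < 1"
  proof -
    have "cmod l2 ^ 2 < 1" using Neq lamgt unfolding N_def
      by (metis less_1_mult mult.commute mult_less_cancel_right2 nle_le norm_ge_zero zero_le_power2 linorder_not_le)
    then show ?thesis by (metis abs_norm_cancel abs_square_less_1)
  qed

  define \<rho> where "\<rho> = cmod l2"
  have rho0: "\<rho> > 0" using l2nz by (simp add: \<rho>_def)
  have rho1': "\<rho> < 1" using rho1 by (simp add: \<rho>_def)
  define \<epsilon> :: real where "\<epsilon> = 1 / (4 * (3 * of_int A + \<bar>of_int B\<bar> + 1))"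
  have den: "4 * (3 * of_int A + \<bar>of_int B\<bar> + 1) > (0::real)" using Apos by simp
  have eps0: "\<epsilon> > 0" using den by (simp add: \<epsilon>_def)
  have eps1: "3 * of_int A * \<epsilon> < 1/2" using den Apos by (simp add: \<epsilon>_def field_simps)
  have eps2: "(1 + 2 * \<bar>of_int B\<bar>) * \<epsilon> < 1/2" using den Apos by (simp add: \<epsilon>_def field_simps)
  define K where "K = 2 * of_int d * (1 + cmod t2) / s"
  have K0: "K > 0" using dpos s0 by (simp add: K_def add_pos_nonneg)
  obtain M :: nat where M: "\<rho>^M < \<epsilon> / K" using real_arch_pow_inv[of "\<epsilon>/K" \<rho>] rho1' eps0 K0 by auto
  have main: "cfrac (9 * (of_int A)^2 * (of_int d * of_rat c) * \<alpha>) = 3 * of_int A * cfrac (of_int d * of_rat c * t) \<and>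
      cfrac (9 * (of_int A)^2 * (of_int d * of_rat c) * \<alpha>^2) = cfrac (of_int d * of_rat c * t^2) - 2 * of_int B * cfrac (of_int d * of_rat c * t)"
    if nM: "int M < n" and abc: "of_rat a + of_rat b * t + of_rat c * t^2 = lam powi n" for n :: int and a b c :: rat
  proof -
    have "n \<ge> 0" using nM by simp
    then obtain m :: nat where nm: "n = int m" using nonneg_int_cases by blast
    have mM: "M \<le> m" using nM nm by simp
    have lp: "lam powi n = lam ^ m" by (simp add: nm)
    obtain u v w :: int where xr: "lam^m = (of_int u + of_int v * t + of_int w * t^2) / of_int d"
        and Eeq: "of_int d * l2^m = of_int u + of_int v * t2 + of_int w * t2^2"
      using rep_lemma[OF LIt dpos dOK' Rel_pow[OF t3 t2c Rl] alg_int_pow[OF ai_lam]] by blast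
    have "of_rat a + of_rat b * t + of_rat c * t^2 = of_rat (of_int u / of_int d) + of_rat (of_int v / of_int d) * t + of_rat (of_int w / of_int d) * t^2"
      using abc lp xr dpos by (simp add: of_rat_divide add_divide_distrib)
    then have "c = of_int w / of_int d" using LI_unique[OF LIt] by blast
    then have kw: "of_int d * of_rat c = (of_int w :: real)" using dpos by (simp add: of_rat_divide)
    define E where "E = of_int d * l2^m"
    have cE: "cnj E = of_int u + of_int v * cnj t2 + of_int w * cnj t2^2"
      using arg_cong[OF Eeq, of cnj] by (simp add: E_def)
    have Eeq': "E = of_int u + of_int v * t2 + of_int w * t2^2" using Eeq by (simp add: E_def)
    have nE: "cmod E = of_int d * \<rho>^m" using dpos by (simp add: E_def \<rho>_def norm_mult norm_power)
    have hs: "t2 + cnj t2 = - of_real t" using tf(5) .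
    have hp: "t2 * cnj t2 = of_real t^2 - of_int p" using tf(6) by simp
    have hd: "cmod (t2 - cnj t2) = s" using tf(4) s0 by (simp add: norm_mult)
    define \<delta>1 where "\<delta>1 = of_int w * t - of_int v"
    define \<delta>2 where "\<delta>2 = of_int w * t^2 - of_int u - of_int p * of_int w"
    have e1: "cnj E - E = (t2 - cnj t2) * of_real \<delta>1"
    proof -
      have "cnj E - E = of_int v * (cnj t2 - t2) + of_int w * (cnj t2 - t2) * (cnj t2 + t2)"
        unfolding cE Eeq' by (simp add: algebra_simps power2_eq_square)
      also have "\<dots> = (t2 - cnj t2) * (of_int w * of_real t - of_int v)"
        using hs by (simp add: algebra_simps)
      finally show ?thesis by (simp add: \<delta>1_def)
    qed
    have e2: "E * cnj t2 - cnj E * t2 = (t2 - cnj t2) * of_real \<delta>2"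
    proof -
      have "E * cnj t2 - cnj E * t2 = (t2 - cnj t2) * (of_int w * (t2 * cnj t2) - of_int u)"
        unfolding cE Eeq' by (simp add: algebra_simps power2_eq_square)
      also have "\<dots> = (t2 - cnj t2) * of_real \<delta>2"
        unfolding hp by (simp add: \<delta>2_def algebra_simps)
      finally show ?thesis .
    qed
    have b1: "s * \<bar>\<delta>1\<bar> \<le> 2 * cmod E"
    proof -
      have "s * \<bar>\<delta>1\<bar> = cmod (cnj E - E)" using e1 hd by (simp add: norm_mult)
      also have "\<dots> \<le> cmod (cnj E) + cmod E" by (rule norm_triangle_ineq4)
      finally show ?thesis by simp
    qed
    have b2: "s * \<bar>\<delta>2\<bar> \<le> 2 * cmod E * cmod t2"
    proof -
      have "s * \<bar>\<delta>2\<bar> = cmod (E * cnj t2 - cnj E * t2)" using e2 hd by (simp add: norm_mult)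
      also have "\<dots> \<le> cmod (E * cnj t2) + cmod (cnj E * t2)" by (rule norm_triangle_ineq4)
      finally show ?thesis by (simp add: norm_mult)
    qed
    have Kb: "K * \<rho>^m < \<epsilon>"
    proof -
      have "\<rho>^m \<le> \<rho>^M" using mM rho0 rho1' by (intro power_decreasing) auto
      then have "K * \<rho>^m \<le> K * \<rho>^M" using K0 by simp
      also have "\<dots> < \<epsilon>" using M K0 by (simp add: pos_less_divide_eq mult.commute)
      finally show ?thesis .
    qed
    define X where "X = 2 * of_int d * \<rho>^m"
    have X0: "X \<ge> 0" using dpos rho0 by (simp add: X_def)
    have d1: "\<bar>\<delta>1\<bar> < \<epsilon>"
    proof -
      have "\<bar>\<delta>1\<bar> \<le> 2 * cmod E / s" using b1 s0 by (simp add: pos_le_divide_eq mult.commute)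
      also have "\<dots> = X / s" by (simp add: X_def nE)
      also have "\<dots> \<le> X * (1 + cmod t2) / s" using X0 s0 by (intro divide_right_mono) (auto simp: mult_le_cancel_left1)
      also have "\<dots> = K * \<rho>^m" by (simp add: X_def K_def)
      finally show ?thesis using Kb by simp
    qed
    have d2: "\<bar>\<delta>2\<bar> < \<epsilon>"
    proof -
      have "\<bar>\<delta>2\<bar> \<le> 2 * cmod E * cmod t2 / s" using b2 s0 by (simp add: pos_le_divide_eq mult.commute)
      also have "\<dots> = X * cmod t2 / s" by (simp add: X_def nE)
      also have "\<dots> \<le> X * (1 + cmod t2) / s" using X0 s0 by (intro divide_right_mono mult_left_mono) auto
      also have "\<dots> = K * \<rho>^m" by (simp add: X_def K_def)
      finally show ?thesis using Kb by simp
    qed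
    have "(1::real) \<le> of_int A" using Apos by simp
    then have "\<epsilon> \<le> 3 * of_int A * \<epsilon>" using eps0 by simp
    then have h1: "\<bar>\<delta>1\<bar> < 1/2" using d1 eps1 by linarith
    have al: "3 * of_int A * \<alpha> = t - of_int B" by (simp add: t_def)
    have f1: "cfrac (of_int d * of_rat c * t) = \<delta>1"
      by (rule cfrac_near[of _ v]) (use h1 in \<open>simp_all add: kw \<delta>1_def\<close>)
    have "\<epsilon> \<le> (1 + 2 * \<bar>of_int B\<bar>) * \<epsilon>" using eps0 by simp
    then have h2: "\<bar>\<delta>2\<bar> < 1/2" using d2 eps2 by linarith
    have f2: "cfrac (of_int d * of_rat c * t^2) = \<delta>2"
      by (rule cfrac_near[of _ "u + p*w"]) (use h2 in \<open>simp_all add: kw \<delta>2_def\<close>)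
    have g1: "cfrac (9 * (of_int A)^2 * (of_int d * of_rat c) * \<alpha>) = 3 * of_int A * \<delta>1"
    proof (rule cfrac_near[of _ "3 * A * v - 3 * A * B * w"])
      have "9 * (of_int A)^2 * (of_int d * of_rat c) * \<alpha> = 3 * of_int A * of_int w * (3 * of_int A * \<alpha>)"
        by (simp add: kw power2_eq_square)
      also have "\<dots> = of_int (3 * A * v - 3 * A * B * w) + 3 * of_int A * \<delta>1"
        unfolding al by (simp add: \<delta>1_def algebra_simps)
      finally show "9 * (of_int A)^2 * (of_int d * of_rat c) * \<alpha> = of_int (3 * A * v - 3 * A * B * w) + 3 * of_int A * \<delta>1" .
      have "\<bar>3 * of_int A * \<delta>1\<bar> = 3 * of_int A * \<bar>\<delta>1\<bar>" using Apos by (simp add: abs_mult)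
      also have "\<dots> < 3 * of_int A * \<epsilon>" using d1 Apos by (intro mult_strict_left_mono) auto
      finally show "\<bar>3 * of_int A * \<delta>1\<bar> < 1/2" using eps1 by linarith
    qed
    have g2: "cfrac (9 * (of_int A)^2 * (of_int d * of_rat c) * \<alpha>^2) = \<delta>2 - 2 * of_int B * \<delta>1"
    proof (rule cfrac_near[of _ "u + p*w - 2 * B * v + B^2*w"])
      have "9 * (of_int A)^2 * (of_int d * of_rat c) * \<alpha>^2 = of_int w * (3 * of_int A * \<alpha>)^2"
        by (simp add: kw power2_eq_square)
      also have "\<dots> = of_int (u + p*w - 2 * B * v + B^2*w) + (\<delta>2 - 2 * of_int B * \<delta>1)"
        unfolding al by (simp add: \<delta>1_def \<delta>2_def algebra_simps power2_eq_square)
      finally show "9 * (of_int A)^2 * (of_int d * of_rat c) * \<alpha>^2 = of_int (u + p*w - 2 * B * v + B^2*w) + (\<delta>2 - 2 * of_int B * \<delta>1)" .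
      have "\<bar>\<delta>2 - 2 * of_int B * \<delta>1\<bar> \<le> \<bar>\<delta>2\<bar> + 2 * \<bar>of_int B\<bar> * \<bar>\<delta>1\<bar>" using abs_triangle_ineq4[of "\<delta>2" "2 * of_int B * \<delta>1"] by (simp add: abs_mult)
      also have "\<dots> \<le> \<epsilon> + 2 * \<bar>of_int B\<bar> * \<epsilon>" using d1 d2 by (intro add_mono mult_left_mono) auto
      also have "\<dots> < 1/2" using eps2 by (simp add: algebra_simps)
      finally show "\<bar>\<delta>2 - 2 * of_int B * \<delta>1\<bar> < 1/2" .
    qed
    show ?thesis using f1 f2 g1 g2 by simp
  qed
  show ?thesis unfolding Let_def using main[unfolded t_def] by blast
qed

end
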